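(* Let $S$ be epsilon-strongly graded and let $r$ be a minimal element of $B(\mathcal{E}_G)^*$. Then the following are equivalent: (i) $r$ is $\gamma$-invariant, i.e. $\gamma_g(r\epsilon_{g^{-1}})=r\epsilon_g$ for all $g\in G$; (ii) $r\in Z(S)$; (iii) $N(r)=\{g\in G: r\epsilon_g=r\}$ is a subgroup of $G$.
   Context: $G$ is a group with identity $e$; $S=\bigoplus_{g\in G}S_g$ is an associative unital ring graded by $G$, $R=S_e$, $XY$ denotes finite sums of products. $S$ is epsilon-strongly graded: for each $g\in G$ the ideal $S_gS_{g^{-1}}$ of $R$ has an identity element $\epsilon_g$ satisfying $\epsilon_gs=s=s\epsilon_{g^{-1}}$ for all $s\in S_g$; $\epsilon_e=1_S$. Each $\epsilon_g$ is an idempotent in the center $Z(R)$ of $R$. For each $g$ fix $n_g\in\mathbb{N}$, $u_g^{(i)}\in S_g$, $v_{g^{-1}}^{(i)}\in S_{g^{-1}}$ with $\sum_{i=1}^{n_g}u_g^{(i)}v_{g^{-1}}^{(i)}=\epsilon_g$ (with $n_e=1$, $u_e^{(1)}=v_e^{(1)}=1$), and define $\gamma_g:S\to S$, $\gamma_g(s)=\sum_{i=1}^{n_g}u_g^{(i)}sv_{g^{-1}}^{(i)}$. $\mathcal{E}_G=\{\epsilon_g:g\in G\}$, $B(\mathcal{E}_G)$ is the multiplicative (Boolean) semigroup generated by $\mathcal{E}_G$, and $B(\mathcal{E}_G)^*=B(\mathcal{E}_G)\setminus\{0\}$, partially ordered by $a\le b$ iff $a=ab$. $Z(S)$ denotes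 the center of $S$. *)

theory Defs
  imports Main
begin

text \<open>The group G is a type of class group_add (operation +, identity 0, inverse uminus;
  not assumed commutative).\<close>

definition add_subgroup :: "'a::ring_1 set \<Rightarrow> bool" where
  "add_subgroup A \<longleftrightarrow> 0 \<in> A \<and> (\<forall>x\<in>A. \<forall>y\<in>A. x + y \<in> A) \<and> (\<forall>x\<in>A. - x \<in> A)"

definition graded_ring :: "('g::group_add \<Rightarrow> 'a::ring_1 set) \<Rightarrow> bool" where
  "graded_ring Sg \<longleftrightarrow>
     (\<forall>g. add_subgroup (Sg g)) \<and>
     (\<forall>g h. \<forall>x\<in>Sg g. \<forall>y\<in>Sg h. x * y \<in> Sg (g + h)) \<and>
     (\<forall>s. \<exists>!f. (\<forall>g. f g \<in> Sg g) \<and> finite {g. f g \<noteq> 0} \<and> s = (\<Sum>g\<in>{g. f g \<noteq> 0}. f g))"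

definition prodset :: "'a::ring_1 set \<Rightarrow> 'a set \<Rightarrow> 'a set" where
  "prodset X Y = {(\<Sum>i<(n::nat). x i * y i) | n x y. \<forall>i<n. x i \<in> X \<and> y i \<in> Y}"

definition is_identity_of :: "'a::ring_1 set \<Rightarrow> 'a \<Rightarrow> bool" where
  "is_identity_of I e \<longleftrightarrow> e \<in> I \<and> (\<forall>x\<in>I. e * x = x \<and> x * e = x)"

definition eps :: "('g::group_add \<Rightarrow> 'a::ring_1 set) \<Rightarrow> 'g \<Rightarrow> 'a" where
  "eps Sg g = (THE e. is_identity_of (prodset (Sg g) (Sg (- g))) e)"

definition epsilon_strongly_graded :: "('g::group_add \<Rightarrow> 'a::ring_1 set) \<Rightarrow> bool" where
  "epsilon_strongly_graded Sg \<longleftrightarrow> graded_ring Sg \<and>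
     (\<forall>g. \<exists>e. is_identity_of (prodset (Sg g) (Sg (- g))) e) \<and>
     (\<forall>g. \<forall>s\<in>Sg g. eps Sg g * s = s \<and> s * eps Sg (- g) = s)"

definition gamma :: "('g \<Rightarrow> nat) \<Rightarrow> ('g \<Rightarrow> nat \<Rightarrow> 'a::ring_1) \<Rightarrow> ('g \<Rightarrow> nat \<Rightarrow> 'a) \<Rightarrow> 'g \<Rightarrow> 'a \<Rightarrow> 'a" where
  "gamma n u v g s = (\<Sum>i<n g. u g i * s * v g i)"

definition B_E :: "('g::group_add \<Rightarrow> 'a::ring_1 set) \<Rightarrow> 'a set" where
  "B_E Sg = {foldr (*) (map (eps Sg) gs) 1 | gs. gs \<noteq> []}"

definition B_E_star :: "('g::group_add \<Rightarrow> 'a::ring_1 set) \<Rightarrow> 'a set" where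
  "B_E_star Sg = B_E Sg - {0}"

definition bool_le :: "'a::ring_1 \<Rightarrow> 'a \<Rightarrow> bool" where
  "bool_le a b \<longleftrightarrow> a = a * b"

definition minimal_in :: "'a::ring_1 set \<Rightarrow> 'a \<Rightarrow> bool" where
  "minimal_in A r \<longleftrightarrow> r \<in> A \<and> (\<forall>a\<in>A. bool_le a r \<longrightarrow> a = r)"

definition center :: "'a::ring_1 set" where
  "center = {z. \<forall>s. z * s = s * z}"

definition N_set :: "('g::group_add \<Rightarrow> 'a::ring_1 set) \<Rightarrow> 'a \<Rightarrow> 'g set" where
  "N_set Sg r = {g. r * eps Sg g = r}"

definition is_subgroup :: "'g::group_add set \<Rightarrow> bool" where
  "is_subgroup H \<longleftrightarrow> 0 \<in> H \<and> (\<forall>x\<in>H. \<forall>y\<in>H. x + y \<in> H) \<and> (\<forall>x\<in>H. - x \<in> H)"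

end

theory Submission
  imports Defs
begin

lemma absorb_r: "(\<forall>x\<in>set xs. r * x = r) \<Longrightarrow> r * foldr (*) xs 1 = (r::'a::ring_1)"
  by (induction xs) (auto simp: mult.assoc[symmetric])

lemma absorb_l: "(\<forall>x\<in>set xs. x * r = r) \<Longrightarrow> foldr (*) xs 1 * r = (r::'a::ring_1)"
  by (induction xs) (auto simp: mult.assoc)

lemma hom_center:
  assumes "graded_ring (Sg :: 'g::group_add \<Rightarrow> 'a::ring_1 set)"
    and "\<And>g s. s \<in> Sg g \<Longrightarrow> z * s = s * z"
  shows "z \<in> center"
  unfolding center_def
proof (intro CollectI allI)
  fix s
  from assms(1) obtain f where f: "\<forall>g. f g \<in> Sg g" "s = (\<Sum>g\<in>{g. f g \<noteq> 0}. f g)"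
    unfolding graded_ring_def by blast
  have "z * s = (\<Sum>g\<in>{g. f g \<noteq> 0}. z * f g)" using f(2) by (simp add: sum_distrib_left)
  also have "\<dots> = (\<Sum>g\<in>{g. f g \<noteq> 0}. f g * z)" using f(1) assms(2) by (intro sum.cong) auto
  also have "\<dots> = s * z" using f(2) by (simp add: sum_distrib_right)
  finally show "z * s = s * z" .
qed

context
  fixes Sg :: "'g::group_add \<Rightarrow> 'a::ring_1 set"
    and n :: "'g \<Rightarrow> nat" and u v :: "'g \<Rightarrow> nat \<Rightarrow> 'a"
  assumes mul: "\<And>x y g h. x \<in> Sg g \<Longrightarrow> y \<in> Sg h \<Longrightarrow> x * y \<in> Sg (g + h)"
    and addc: "\<And>g. add_subgroup (Sg g)"
    and epsl: "\<And>g s. s \<in> Sg g \<Longrightarrow> eps Sg g * s = s"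
    and epsr: "\<And>g s. s \<in> Sg g \<Longrightarrow> s * eps Sg (- g) = s"
    and uv_mem: "\<And>g i. i < n g \<Longrightarrow> u g i \<in> Sg g \<and> v g i \<in> Sg (- g)"
    and uv_sum: "\<And>g. (\<Sum>i<n g. u g i * v g i) = eps Sg g"
begin

lemma sum_mem: "(\<forall>i<(m::nat). f i \<in> Sg g) \<Longrightarrow> (\<Sum>i<m. f i) \<in> Sg g"
proof (induction m)
  case 0 then show ?case using addc unfolding add_subgroup_def by auto
next
  case (Suc m) then show ?case using addc[of g] unfolding add_subgroup_def by auto
qed

lemma eps_S0: "eps Sg g \<in> Sg 0"
proof -
  have "(\<Sum>i<n g. u g i * v g i) \<in> Sg 0"
    by (rule sum_mem) (use mul uv_mem in \<open>metis add.right_inverse\<close>)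
  then show ?thesis using uv_sum by simp
qed

lemma L: assumes s: "s \<in> Sg g" shows "s * eps Sg h = eps Sg (g + h) * s"
proof -
  have "s * eps Sg h = (\<Sum>j<n h. s * u h j * v h j)"
    by (simp add: uv_sum[symmetric] sum_distrib_left mult.assoc)
  also have "\<dots> = (\<Sum>j<n h. eps Sg (g+h) * (s * u h j) * v h j)"
    using epsl mul s uv_mem by (intro sum.cong) auto
  also have "\<dots> = eps Sg (g+h) * s * eps Sg h"
    by (simp add: uv_sum[symmetric] sum_distrib_left mult.assoc)
  finally have 1: "s * eps Sg h = eps Sg (g+h) * s * eps Sg h" .
  have "eps Sg (g+h) * s = (\<Sum>i<n (g+h). u (g+h) i * (v (g+h) i * s))"
    by (simp add: uv_sum[symmetric] sum_distrib_right mult.assoc)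
  also have "\<dots> = (\<Sum>i<n (g+h). u (g+h) i * (v (g+h) i * s * eps Sg h))"
  proof (intro sum.cong refl)
    fix i assume "i \<in> {..<n (g+h)}"
    then have "v (g+h) i * s \<in> Sg (- (g+h) + g)" using mul uv_mem s by auto
    then have "v (g+h) i * s \<in> Sg (- h)" by (simp add: minus_add add.assoc)
    then have "v (g+h) i * s * eps Sg (- (- h)) = v (g+h) i * s" by (rule epsr)
    then show "u (g+h) i * (v (g+h) i * s) = u (g+h) i * (v (g+h) i * s * eps Sg h)" by simp
  qed
  also have "\<dots> = eps Sg (g+h) * s * eps Sg h"
    by (simp add: uv_sum[symmetric] sum_distrib_right mult.assoc)
  finally show ?thesis using 1 by simp
qed

lemma comm0: "x \<in> Sg 0 \<Longrightarrow> x * eps Sg h = eps Sg h * x"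
  using L[of x 0 h] by simp

lemma eps_comm: "eps Sg k * eps Sg h = eps Sg h * eps Sg k"
  using comm0[OF eps_S0] by simp

lemma eps_idem: "eps Sg g * eps Sg g = eps Sg g"
proof -
  have "eps Sg g * eps Sg g = (\<Sum>i<n g. eps Sg g * u g i * v g i)"
    by (simp add: uv_sum[symmetric] sum_distrib_left mult.assoc)
  also have "\<dots> = (\<Sum>i<n g. u g i * v g i)" using epsl uv_mem by (intro sum.cong) auto
  finally show ?thesis using uv_sum by simp
qed

lemma comm0_P: "x \<in> Sg 0 \<Longrightarrow> x * foldr (*) (map (eps Sg) gs) 1 = foldr (*) (map (eps Sg) gs) 1 * x"
proof (induction gs)
  case Nil then show ?case by simp
next
  case (Cons a gs)
  have "x * (eps Sg a * foldr (*) (map (eps Sg) gs) 1) = eps Sg a * x * foldr (*) (map (eps Sg) gs) 1"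
    using comm0[OF Cons.prems] by (simp add: mult.assoc[symmetric])
  also have "\<dots> = eps Sg a * foldr (*) (map (eps Sg) gs) 1 * x"
    using Cons by (simp add: mult.assoc)
  finally show ?case by simp
qed

lemma P_idem: "foldr (*) (map (eps Sg) gs) 1 * foldr (*) (map (eps Sg) gs) 1 = foldr (*) (map (eps Sg) gs) 1"
proof (induction gs)
  case Nil then show ?case by simp
next
  case (Cons a gs)
  let ?P = "foldr (*) (map (eps Sg) gs) 1"
  have c: "?P * eps Sg a = eps Sg a * ?P" using comm0_P[OF eps_S0, of a gs] by simp
  have "eps Sg a * ?P * (eps Sg a * ?P) = eps Sg a * (?P * eps Sg a) * ?P" by (simp add: mult.assoc)
  also have "\<dots> = eps Sg a * (eps Sg a * ?P) * ?P" using c by simp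
  also have "\<dots> = eps Sg a * eps Sg a * (?P * ?P)" by (simp add: mult.assoc)
  also have "\<dots> = eps Sg a * ?P" using Cons eps_idem by simp
  finally show ?case by simp
qed

lemma P_mem_eps: "h \<in> set gs \<Longrightarrow> foldr (*) (map (eps Sg) gs) 1 * eps Sg h = foldr (*) (map (eps Sg) gs) 1"
proof (induction gs)
  case Nil then show ?case by simp
next
  case (Cons a gs)
  let ?P = "foldr (*) (map (eps Sg) gs) 1"
  show ?case
  proof (cases "h = a")
    case True
    have c: "?P * eps Sg a = eps Sg a * ?P" using comm0_P[OF eps_S0, of a gs] by simp
    have "eps Sg a * ?P * eps Sg a = eps Sg a * (?P * eps Sg a)" by (simp add: mult.assoc)
    also have "\<dots> = eps Sg a * (eps Sg a * ?P)" using c by simp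
    also have "\<dots> = eps Sg a * eps Sg a * ?P" by (simp add: mult.assoc)
    finally have "eps Sg a * ?P * eps Sg a = eps Sg a * eps Sg a * ?P" .
    then show ?thesis using True eps_idem by simp
  next
    case False
    then show ?thesis using Cons by (simp add: mult.assoc)
  qed
qed

lemma shift: "s \<in> Sg g \<Longrightarrow> s * foldr (*) (map (eps Sg) gs) 1 = foldr (*) (map (\<lambda>h. eps Sg (g+h)) gs) 1 * s"
proof (induction gs)
  case Nil then show ?case by simp
next
  case (Cons a gs)
  have "s * (eps Sg a * foldr (*) (map (eps Sg) gs) 1) = eps Sg (g+a) * s * foldr (*) (map (eps Sg) gs) 1"
    using L[OF Cons.prems] by (simp add: mult.assoc[symmetric])
  also have "\<dots> = eps Sg (g+a) * foldr (*) (map (\<lambda>h. eps Sg (g+h)) gs) 1 * s"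
    using Cons by (simp add: mult.assoc)
  finally show ?case by simp
qed

lemma shiftl: "s \<in> Sg g \<Longrightarrow> foldr (*) (map (eps Sg) gs) 1 * s = s * foldr (*) (map (\<lambda>h. eps Sg (-g+h)) gs) 1"
proof (induction gs)
  case Nil then show ?case by simp
next
  case (Cons a gs)
  have e: "s * eps Sg (-g+a) = eps Sg a * s" using L[OF Cons.prems, of "-g+a"] by (simp add: add.assoc[symmetric])
  have "eps Sg a * foldr (*) (map (eps Sg) gs) 1 * s = eps Sg a * s * foldr (*) (map (\<lambda>h. eps Sg (-g+h)) gs) 1"
    using Cons by (simp add: mult.assoc)
  also have "\<dots> = s * eps Sg (-g+a) * foldr (*) (map (\<lambda>h. eps Sg (-g+h)) gs) 1"
    using e by simp
  also have "\<dots> = s * (eps Sg (-g+a) * foldr (*) (map (\<lambda>h. eps Sg (-g+h)) gs) 1)"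
    by (simp add: mult.assoc)
  finally show ?case by simp
qed

end

theorem mainTheorem8:
  fixes Sg :: "'g::group_add \<Rightarrow> 'a::ring_1 set"
    and n :: "'g \<Rightarrow> nat" and u v :: "'g \<Rightarrow> nat \<Rightarrow> 'a" and r :: 'a
  assumes esg: "epsilon_strongly_graded Sg"
    and uv_mem: "\<And>g i. i < n g \<Longrightarrow> u g i \<in> Sg g \<and> v g i \<in> Sg (- g)"
    and uv_sum: "\<And>g. (\<Sum>i<n g. u g i * v g i) = eps Sg g"
    and n0: "n 0 = 1" and u0: "u 0 0 = 1" and v0: "v 0 0 = 1"
    and rmin: "minimal_in (B_E_star Sg) r"
  shows "((\<forall>g. gamma n u v g (r * eps Sg (- g)) = r * eps Sg g) \<longleftrightarrow> r \<in> center)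
       \<and> (r \<in> center \<longleftrightarrow> is_subgroup (N_set Sg r))"
proof -
  have gr: "graded_ring Sg" using esg unfolding epsilon_strongly_graded_def by blast
  have mul: "\<And>x y g h. x \<in> Sg g \<Longrightarrow> y \<in> Sg h \<Longrightarrow> x * y \<in> Sg (g + h)"
    using gr unfolding graded_ring_def by blast
  have addc: "\<And>g. add_subgroup (Sg g)" using gr unfolding graded_ring_def by blast
  have epsl: "\<And>g s. s \<in> Sg g \<Longrightarrow> eps Sg g * s = s"
    and epsr: "\<And>g s. s \<in> Sg g \<Longrightarrow> s * eps Sg (- g) = s"
    using esg unfolding epsilon_strongly_graded_def by blast+
  note ctx = mul addc epsl epsr uv_mem uv_sum
  let ?E = "eps Sg"
  have rB: "r \<in> B_E Sg" and r0: "r \<noteq> 0" using rmin unfolding minimal_in_def B_E_star_def by auto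
  then obtain gs where rgs: "r = foldr (*) (map ?E gs) 1" unfolding B_E_def by auto
  have eps0: "?E 0 = 1" using uv_sum[of 0] n0 u0 v0 by simp
  have rcomm: "\<And>k. r * ?E k = ?E k * r"
    using comm0_P[OF ctx eps_S0[OF ctx]] rgs by metis
  have rS0: "\<And>x. x \<in> Sg 0 \<Longrightarrow> x * r = r * x" using comm0_P[OF ctx] rgs by metis
  have ridem: "r * r = r" using P_idem[OF ctx] rgs by metis
  have dich: "\<And>k. r * ?E k = 0 \<or> r * ?E k = r"
  proof -
    fix k
    have aB: "?E k * r \<in> B_E Sg" unfolding B_E_def rgs by (intro CollectI exI[of _ "k#gs"]) simp
    have "bool_le (?E k * r) r" unfolding bool_le_def using ridem by (simp add: mult.assoc)
    then have "?E k * r \<noteq> 0 \<Longrightarrow> ?E k * r = r" using rmin aB unfolding minimal_in_def B_E_star_def by blast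
    then show "r * ?E k = 0 \<or> r * ?E k = r" using rcomm by metis
  qed
  have inN: "\<And>k. k \<in> N_set Sg r \<longleftrightarrow> r * ?E k = r" unfolding N_set_def by simp
  have ii_i: "r \<in> center \<Longrightarrow> (\<forall>g. gamma n u v g (r * ?E (- g)) = r * ?E g)"
  proof (intro allI)
    fix g assume c: "r \<in> center"
    have "gamma n u v g (r * ?E (- g)) = (\<Sum>i<n g. u g i * r * (?E (-g) * v g i))"
      unfolding gamma_def by (simp add: mult.assoc)
    also have "\<dots> = (\<Sum>i<n g. r * u g i * v g i)"
      using c epsl uv_mem unfolding center_def by (intro sum.cong) auto
    also have "\<dots> = r * ?E g" by (simp add: uv_sum[symmetric] sum_distrib_left mult.assoc)
    finally show "gamma n u v g (r * ?E (- g)) = r * ?E g" .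
  qed
  have i_ii: "(\<forall>g. gamma n u v g (r * ?E (- g)) = r * ?E g) \<Longrightarrow> r \<in> center"
  proof -
    assume i: "\<forall>g. gamma n u v g (r * ?E (- g)) = r * ?E g"
    show ?thesis
    proof (rule hom_center[OF gr])
      fix g s assume s: "s \<in> Sg g"
      have "r * s = r * ?E g * s" using epsl[OF s] by (simp add: mult.assoc)
      also have "\<dots> = gamma n u v g (r * ?E (- g)) * s" using i by simp
      also have "\<dots> = (\<Sum>i<n g. u g i * r * (?E (-g) * v g i) * s)"
        unfolding gamma_def by (simp add: mult.assoc sum_distrib_right)
      also have "\<dots> = (\<Sum>i<n g. u g i * v g i * s * r)"
      proof (intro sum.cong refl)
        fix i assume "i \<in> {..<n g}"
        then have vi: "v g i \<in> Sg (-g)" and vs: "v g i * s \<in> Sg 0" using uv_mem mul s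
          by (auto, metis add.left_inverse)
        have "u g i * r * (?E (-g) * v g i) * s = u g i * (r * (v g i * s))"
          using epsl[OF vi] by (simp add: mult.assoc)
        also have "\<dots> = u g i * v g i * s * r" using rS0[OF vs] by (simp add: mult.assoc)
        finally show "u g i * r * (?E (-g) * v g i) * s = u g i * v g i * s * r" .
      qed
      also have "\<dots> = ?E g * s * r" by (simp add: uv_sum[symmetric] sum_distrib_right)
      also have "\<dots> = s * r" using epsl[OF s] by simp
      finally show "r * s = s * r" .
    qed
  qed
  have ii_iii: "r \<in> center \<Longrightarrow> is_subgroup (N_set Sg r)"
  proof -
    assume c: "r \<in> center"
    have cc: "\<And>s. r * s = s * r" using c unfolding center_def by auto
    have z: "0 \<in> N_set Sg r" using inN eps0 by simp
    have cl: "\<And>x y. x \<in> N_set Sg r \<Longrightarrow> y \<in> N_set Sg r \<Longrightarrow> x + y \<in> N_set Sg r"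
    proof -
      fix x y assume x: "x \<in> N_set Sg r" and y: "y \<in> N_set Sg r"
      have "r = r * ?E x" using x inN by simp
      also have "\<dots> = (\<Sum>i<n x. u x i * (r * ?E y) * v x i)"
        using y inN by (simp add: uv_sum[symmetric] sum_distrib_left mult.assoc cc)
      also have "\<dots> = (\<Sum>i<n x. ?E (x+y) * (u x i * r * v x i))"
      proof (intro sum.cong refl)
        fix i assume "i \<in> {..<n x}"
        then have "u x i \<in> Sg x" using uv_mem by auto
        from L[OF ctx this, of y] show "u x i * (r * ?E y) * v x i = ?E (x+y) * (u x i * r * v x i)"
          by (metis cc mult.assoc)
      qed
      also have "\<dots> = ?E (x+y) * (\<Sum>i<n x. r * u x i * v x i)"
        by (simp add: sum_distrib_left cc mult.assoc)
      also have "\<dots> = ?E (x+y) * (r * ?E x)"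
        by (simp add: uv_sum[symmetric] sum_distrib_left mult.assoc)
      also have "\<dots> = ?E (x+y) * r" using x inN by simp
      finally show "x + y \<in> N_set Sg r" using inN cc by metis
    qed
    have iv: "\<And>x. x \<in> N_set Sg r \<Longrightarrow> - x \<in> N_set Sg r"
    proof (rule ccontr)
      fix x assume x: "x \<in> N_set Sg r" and nx: "- x \<notin> N_set Sg r"
      then have z0: "r * ?E (-x) = 0" using dich inN by blast
      have "r = r * ?E x" using x inN by simp
      also have "\<dots> = (\<Sum>i<n x. u x i * (r * ?E (-x)) * (v x i))"
      proof -
        have "r * ?E x = (\<Sum>i<n x. u x i * r * v x i)"
          by (simp add: uv_sum[symmetric] sum_distrib_left mult.assoc cc)
        also have "\<dots> = (\<Sum>i<n x. u x i * (r * ?E (-x)) * (v x i))"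
          using epsl uv_mem by (intro sum.cong) (auto simp: mult.assoc)
        finally show ?thesis .
      qed
      also have "\<dots> = 0" using z0 by simp
      finally show False using r0 by simp
    qed
    show ?thesis unfolding is_subgroup_def using z cl iv by blast
  qed
  have iii_ii: "is_subgroup (N_set Sg r) \<Longrightarrow> r \<in> center"
  proof -
    assume sg: "is_subgroup (N_set Sg r)"
    have gsN: "\<And>h. h \<in> set gs \<Longrightarrow> h \<in> N_set Sg r"
      using P_mem_eps[OF ctx] rgs inN by metis
    show ?thesis
    proof (rule hom_center[OF gr])
      fix g s assume s: "s \<in> Sg g"
      show "r * s = s * r"
      proof (cases "g \<in> N_set Sg r")
        case True
        have ng: "- g \<in> N_set Sg r" using sg True unfolding is_subgroup_def by blast
        obtain x where x: "s * r = x * s" and rx: "r * x = r"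
        proof
          show "s * r = foldr (*) (map (\<lambda>h. ?E (g+h)) gs) 1 * s" using shift[OF ctx s] rgs by metis
          have "\<forall>y\<in>set (map (\<lambda>h. ?E (g+h)) gs). r * y = r"
            using gsN True sg inN unfolding is_subgroup_def by auto
          then show "r * foldr (*) (map (\<lambda>h. ?E (g+h)) gs) 1 = r" by (rule absorb_r)
        qed
        obtain y where y: "r * s = s * y" and yr: "y * r = r"
        proof
          show "r * s = s * foldr (*) (map (\<lambda>h. ?E (-g+h)) gs) 1" using shiftl[OF ctx s] rgs by metis
          have "\<forall>y\<in>set (map (\<lambda>h. ?E (-g+h)) gs). y * r = r"
            using gsN ng sg inN rcomm unfolding is_subgroup_def by auto
          then show "foldr (*) (map (\<lambda>h. ?E (-g+h)) gs) 1 * r = r" by (rule absorb_l)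
        qed
        have "r * s * r = r * s" using x rx by (metis mult.assoc)
        moreover have "r * s * r = s * r" using y yr by (metis mult.assoc)
        ultimately show ?thesis by simp
      next
        case False
        have ng: "- g \<notin> N_set Sg r" using sg False unfolding is_subgroup_def by (metis minus_minus)
        have "r * s = r * ?E g * s" using epsl[OF s] by (simp add: mult.assoc)
        also have "\<dots> = 0" using False dich[of g] inN[of g] by auto
        finally have 1: "r * s = 0" .
        have "s * r = s * (?E (-g) * r)" using epsr[OF s] by (metis mult.assoc)
        also have "\<dots> = 0" using ng dich inN rcomm by (metis mult_zero_right)
        finally show ?thesis using 1 by simp
      qed
    qed
  qed
  show ?thesis using i_ii ii_i ii_iii iii_ii by blast
qed

end
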